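(* No nonzero $E$-linear code of length $2n$ is both left symplectic nice and right symplectic nice.
   Context: $E=\langle \kappa,\tau \mid 2\kappa=2\tau=0,\ \kappa^2=\kappa,\ \tau^2=\tau,\ \kappa\tau=\kappa,\ \tau\kappa=\tau\rangle$ is the non-unital ring $\{0,\kappa,\tau,\zeta\}$ ($|E|=4$), $\zeta=\kappa+\tau$, with $e\kappa=e\tau=e$, $e\zeta=0$ for all $e\in E$. An $E$-linear code of length $2n$ is a left $E$-submodule $C\subseteq E^{2n}$. Symplectic inner product: for $x=(u|v),y=(u'|v')\in E^{2n}$, $\langle x,y\rangle_s=\sum_i u_iv'_i+\sum_i v_iu'_i$. $C^{\perp_{S_L}}=\{z\in E^{2n}:\langle z,w\rangle_s=0\ \forall w\in C\}$, $C^{\perp_{S_R}}=\{z\in E^{2n}:\langle w,z\rangle_s=0\ \forall w\in C\}$. $C$ is left (resp. right) symplectic nice if $|C|\,|C^{\perp_{S_L}}|=|E|^{2n}$ (resp. $|C|\,|C^{\perp_{S_R}}|=|E|^{2n}$). *)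

theory Defs
  imports Main
begin

text \<open>The non-unital ring E = {0, kappa, tau, zeta}, zeta = kappa + tau, characteristic 2,
  with multiplication e*kappa = e*tau = e, e*zeta = 0 (and e*0 = 0).\<close>

datatype E = EZ | EK | ET | EZt

fun E_add :: "E \<Rightarrow> E \<Rightarrow> E" where
  "E_add EZ y = y"
| "E_add x EZ = x"
| "E_add EK EK = EZ" | "E_add EK ET = EZt" | "E_add EK EZt = ET"
| "E_add ET EK = EZt" | "E_add ET ET = EZ" | "E_add ET EZt = EK"
| "E_add EZt EK = ET" | "E_add EZt ET = EK" | "E_add EZt EZt = EZ"

fun E_mul :: "E \<Rightarrow> E \<Rightarrow> E" where
  "E_mul x EK = x"
| "E_mul x ET = x"
| "E_mul x EZt = EZ"
| "E_mul x EZ = EZ"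

instantiation E :: comm_monoid_add
begin
definition zero_E :: E where "zero_E = EZ"
definition plus_E :: "E \<Rightarrow> E \<Rightarrow> E" where "plus_E = E_add"
instance
proof
  fix a b c :: E
  show "a + b + c = a + (b + c)" unfolding plus_E_def
    by (cases a; cases b; cases c; simp)
  show "a + b = b + a" unfolding plus_E_def by (cases a; cases b; simp)
  show "0 + a = a" unfolding plus_E_def zero_E_def by simp
qed
end

instantiation E :: times
begin
definition times_E :: "E \<Rightarrow> E \<Rightarrow> E" where "times_E = E_mul"
instance ..
end

lemma E_UNIV: "(UNIV :: E set) = {EZ, EK, ET, EZt}"
  using E.exhaust by auto

instance E :: finite
  by standard (simp add: E_UNIV)

text \<open>Vectors of E^{2n}: functions nat => E vanishing from index 2n on.
  A vector x = (u|v) has u_i = x i and v_i = x (n+i) for i < n.\<close>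

definition E_vecs :: "nat \<Rightarrow> (nat \<Rightarrow> E) set" where
  "E_vecs n = {x. \<forall>i. 2 * n \<le> i \<longrightarrow> x i = 0}"

definition E_linear_code :: "nat \<Rightarrow> (nat \<Rightarrow> E) set \<Rightarrow> bool" where
  "E_linear_code n C \<longleftrightarrow> C \<subseteq> E_vecs n \<and> (\<lambda>_. 0) \<in> C
     \<and> (\<forall>x\<in>C. \<forall>y\<in>C. (\<lambda>i. x i + y i) \<in> C)
     \<and> (\<forall>e::E. \<forall>x\<in>C. (\<lambda>i. e * x i) \<in> C)"

definition symp :: "nat \<Rightarrow> (nat \<Rightarrow> E) \<Rightarrow> (nat \<Rightarrow> E) \<Rightarrow> E" where
  "symp n x y = (\<Sum>i<n. x i * y (n + i)) + (\<Sum>i<n. x (n + i) * y i)"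

definition perp_SL :: "nat \<Rightarrow> (nat \<Rightarrow> E) set \<Rightarrow> (nat \<Rightarrow> E) set" where
  "perp_SL n C = {z \<in> E_vecs n. \<forall>w\<in>C. symp n z w = 0}"

definition perp_SR :: "nat \<Rightarrow> (nat \<Rightarrow> E) set \<Rightarrow> (nat \<Rightarrow> E) set" where
  "perp_SR n C = {z \<in> E_vecs n. \<forall>w\<in>C. symp n w z = 0}"

definition left_symp_nice :: "nat \<Rightarrow> (nat \<Rightarrow> E) set \<Rightarrow> bool" where
  "left_symp_nice n C \<longleftrightarrow> card C * card (perp_SL n C) = card (UNIV :: E set) ^ (2 * n)"

definition right_symp_nice :: "nat \<Rightarrow> (nat \<Rightarrow> E) set \<Rightarrow> bool" where
  "right_symp_nice n C \<longleftrightarrow> card C * card (perp_SR n C) = card (UNIV :: E set) ^ (2 * n)"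

end

theory Submission
  imports Defs "HOL-Library.FuncSet"
begin

instance E :: semiring_0
proof
  fix a b c :: E
  show "a * b * c = a * (b * c)" unfolding times_E_def by (cases a; cases b; cases c; simp)
  show "(a + b) * c = a * c + b * c" unfolding times_E_def plus_E_def
    by (cases a; cases b; cases c; simp)
  show "a * (b + c) = a * b + a * c" unfolding times_E_def plus_E_def
    by (cases a; cases b; cases c; simp)
  show "0 * a = 0" unfolding times_E_def zero_E_def by (cases a; simp)
  show "a * 0 = 0" unfolding times_E_def zero_E_def by (cases a; simp)
qed

lemma E_add_self[simp]: "(x::E) + x = 0"
  by (cases x) (simp_all add: plus_E_def zero_E_def)

lemma zt_mul: "EK * y = 0 \<Longrightarrow> (x::E) * y = 0"
  unfolding times_E_def zero_E_def by (cases x; cases y; simp)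

lemma zt_left: "EK * x = 0 \<Longrightarrow> EK * (x * (y::E)) = 0"
  unfolding times_E_def zero_E_def by (cases x; cases y; simp)

lemma decomp: "(x::E) = EK * x + (x + EK * x)"
  unfolding times_E_def plus_E_def by (cases x; simp)

lemma zt_decomp: "EK * ((x::E) + EK * x) = 0"
  unfolding times_E_def plus_E_def zero_E_def by (cases x; simp)

lemma K_Zt: "EK * (s::E) = 0 \<longleftrightarrow> EZt * s = 0"
  unfolding times_E_def zero_E_def by (cases s; simp)

lemma Zt_shift: "EK * (s::E) = 0 \<Longrightarrow> (s + EZt = 0) = (s \<noteq> 0)"
  unfolding times_E_def plus_E_def zero_E_def by (cases s; simp)

lemma Zt_nz: "EK * (s::E) = 0 \<Longrightarrow> s \<noteq> 0 \<Longrightarrow> s = EZt"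
  unfolding times_E_def zero_E_def by (cases s; simp)

lemma EZt_K: "EZt * EK = EZt"
  unfolding times_E_def by simp

lemma symp_add_left: "symp n (\<lambda>i. x i + y i) z = symp n x z + symp n y z"
  unfolding symp_def by (simp add: sum.distrib distrib_right add_ac)

lemma symp_add_right: "symp n z (\<lambda>i. x i + y i) = symp n z x + symp n z y"
  unfolding symp_def by (simp add: sum.distrib distrib_left add_ac)

lemma symp_smult_left: "symp n (\<lambda>i. e * x i) z = e * symp n x z"
  unfolding symp_def by (simp add: sum_distrib_left distrib_left mult.assoc)

lemma symp_zero_left[simp]: "symp n (\<lambda>_. 0) z = 0"
  unfolding symp_def by simp

lemma symp_zt: "(\<And>i. EK * w i = 0) \<Longrightarrow> EK * symp n w z = 0"
  using symp_smult_left[of n EK w z] by simp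

lemma symp_zt_right: "(\<And>i. EK * w i = 0) \<Longrightarrow> symp n z w = 0"
  unfolding symp_def by (simp add: zt_mul)

lemma balance:
  assumes "finite S" "\<And>x. x\<in>S \<Longrightarrow> g x \<in> S" "\<And>x. x\<in>S \<Longrightarrow> g (g x) = x"
    "\<And>x. x\<in>S \<Longrightarrow> P (g x) \<longleftrightarrow> \<not> P x"
  shows "2 * card {x\<in>S. P x} = card S"
proof -
  have "bij_betw g {x\<in>S. P x} {x\<in>S. \<not> P x}"
    by (rule bij_betw_byWitness[where f'=g]) (use assms in auto)
  then have "card {x\<in>S. P x} = card {x\<in>S. \<not> P x}" by (rule bij_betw_same_card)
  moreover have "card S = card {x\<in>S. P x} + card {x\<in>S. \<not> P x}"
  proof -
    have "S = {x\<in>S. P x} \<union> {x\<in>S. \<not> P x}" by auto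
    then have "card S = card ({x\<in>S. P x} \<union> {x\<in>S. \<not> P x})" by simp
    also have "\<dots> = card {x\<in>S. P x} + card {x\<in>S. \<not> P x}"
      by (rule card_Un_disjoint) (use assms(1) in auto)
    finally show ?thesis .
  qed
  ultimately show ?thesis by simp
qed

lemma card_filter_sum: "finite A \<Longrightarrow> card {x\<in>A. P x} = (\<Sum>x\<in>A. if P x then 1 else 0::nat)"
  by (simp add: sum.If_cases Int_def conj_commute)


lemma E_vecs_add: "x \<in> E_vecs n \<Longrightarrow> y \<in> E_vecs n \<Longrightarrow> (\<lambda>i. x i + y i) \<in> E_vecs n"
  unfolding E_vecs_def by simp

lemma vadd_invol: "(\<lambda>i. (\<lambda>i. x i + y i) i + y i) = (x :: nat \<Rightarrow> E)"
  by (simp add: add.assoc)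

lemma count:
  fixes A :: "(nat \<Rightarrow> E) set"
  assumes AV: "A \<subseteq> E_vecs n" and finV: "finite (E_vecs n)" and A0: "(\<lambda>_. 0) \<in> A"
    and Aadd: "\<And>x y. x\<in>A \<Longrightarrow> y\<in>A \<Longrightarrow> (\<lambda>i. x i + y i) \<in> A"
    and Azt: "\<And>w i. w\<in>A \<Longrightarrow> EK * w i = 0"
  shows "card (E_vecs n) = card (perp_SR n A) * card A"
proof -
  define V where "V = E_vecs n"
  define CR where "CR = perp_SR n A"
  have CRdef: "CR = {z\<in>V. \<forall>w\<in>A. symp n w z = 0}" unfolding CR_def perp_SR_def V_def by simp
  have finA: "finite A" using AV finV finite_subset by blast
  have finV': "finite V" using finV V_def by simp
  have CRV: "CR \<subseteq> V" using CRdef by auto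
  have swap: "(\<Sum>w\<in>A. card {z\<in>V. symp n w z = 0}) = (\<Sum>z\<in>V. card {w\<in>A. symp n w z = 0})"
    by (simp add: card_filter_sum finA finV' sum.swap[of _ A V])
  have rowz: "2 * card {z\<in>V. symp n w z = 0} = card V" if wA: "w \<in> A" and wnz: "w \<noteq> (\<lambda>_. 0)" for w
  proof -
    have "\<exists>j. w j \<noteq> 0"
    proof (rule ccontr)
      assume "\<not> (\<exists>j. w j \<noteq> 0)"
      then have "w = (\<lambda>_. 0)" by auto
      then show False using wnz by simp
    qed
    then obtain j where wj: "w j \<noteq> 0" by blast
    have wV: "w \<in> E_vecs n" using wA AV by auto
    have j2n: "j < 2 * n"
    proof (rule ccontr)
      assume "\<not> j < 2 * n"
      then have "w j = 0" using wV unfolding E_vecs_def by simp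
      then show False using wj by simp
    qed
    have wjz: "w j = EZt" using Zt_nz[OF Azt[OF wA] wj] .
    define k where "k = (if j < n then n + j else j - n)"
    have k2n: "k < 2 * n" using j2n k_def by auto
    define z0 :: "nat \<Rightarrow> E" where "z0 = (\<lambda>i. if i = k then EK else 0)"
    have z0V: "z0 \<in> V" unfolding V_def E_vecs_def z0_def using k2n by auto
    have sz0: "symp n w z0 = EZt"
    proof (cases "j < n")
      case True
      have s1: "(\<Sum>i<n. w i * z0 (n+i)) = (\<Sum>i<n. if i = j then w j * EK else 0)"
        by (rule sum.cong) (auto simp: z0_def k_def True)
      have s2: "(\<Sum>i<n. w (n+i) * z0 i) = (\<Sum>i<n. 0)"
        by (rule sum.cong) (auto simp: z0_def k_def True)
      show ?thesis unfolding symp_def s1 s2 using True by (simp add: wjz EZt_K)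
    next
      case False
      have s1: "(\<Sum>i<n. w i * z0 (n+i)) = (\<Sum>i<n. 0)"
        by (rule sum.cong) (use False j2n in \<open>auto simp: z0_def k_def\<close>)
      have s2: "(\<Sum>i<n. w (n+i) * z0 i) = (\<Sum>i<n. if i = j - n then w j * EK else 0)"
        by (rule sum.cong) (use False j2n in \<open>auto simp: z0_def k_def\<close>)
      show ?thesis unfolding symp_def s1 s2 using False j2n by (simp add: wjz EZt_K less_diff_conv2)
    qed
    show ?thesis
    proof (rule balance[where g="\<lambda>z i. z i + z0 i"])
      show "finite V" by (rule finV')
      show "(\<lambda>i. z i + z0 i) \<in> V" if "z \<in> V" for z
        using E_vecs_add that z0V V_def by simp
      show "(\<lambda>i. (\<lambda>i. z i + z0 i) i + z0 i) = z" for z by (rule vadd_invol)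
      show "(symp n w (\<lambda>i. z i + z0 i) = 0) = (\<not> symp n w z = 0)" for z
        using Zt_shift[OF symp_zt[OF Azt[OF wA]]] by (simp add: symp_add_right sz0)
    qed
  qed
  have col: "2 * card {w\<in>A. symp n w z = 0} = card A" if zV: "z \<in> V" and zn: "z \<notin> CR" for z
  proof -
    obtain w1 where w1A: "w1 \<in> A" and w1n: "symp n w1 z \<noteq> 0" using zV zn CRdef by auto
    have sw1: "symp n w1 z = EZt" using Zt_nz[OF symp_zt[OF Azt[OF w1A]] w1n] .
    show ?thesis
    proof (rule balance[where g="\<lambda>w i. w i + w1 i"])
      show "finite A" by (rule finA)
      show "(\<lambda>i. w i + w1 i) \<in> A" if "w \<in> A" for w using Aadd that w1A by simp
      show "(\<lambda>i. (\<lambda>i. w i + w1 i) i + w1 i) = w" for w by (rule vadd_invol)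
      show "(symp n (\<lambda>i. w i + w1 i) z = 0) = (\<not> symp n w z = 0)" if "w \<in> A" for w
        using Zt_shift[OF symp_zt[OF Azt[OF that]]] by (simp add: symp_add_left sw1)
    qed
  qed
  have colCR: "card {w\<in>A. symp n w z = 0} = card A" if "z \<in> CR" for z
  proof -
    have "{w\<in>A. symp n w z = 0} = A" using that CRdef by auto
    then show ?thesis by simp
  qed
  have L: "2 * (\<Sum>w\<in>A. card {z\<in>V. symp n w z = 0}) = 2 * card V + (card A - 1) * card V"
  proof -
    have "(\<Sum>w\<in>A. card {z\<in>V. symp n w z = 0}) = card {z\<in>V. symp n (\<lambda>_. 0) z = 0}
        + (\<Sum>w\<in>A - {\<lambda>_. 0}. card {z\<in>V. symp n w z = 0})"
      by (rule sum.remove[OF finA A0])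
    moreover have "card {z\<in>V. symp n (\<lambda>_. 0) z = 0} = card V" by simp
    moreover have "2 * (\<Sum>w\<in>A - {\<lambda>_. 0}. card {z\<in>V. symp n w z = 0})
        = (\<Sum>w\<in>A - {\<lambda>_. 0}. card V)"
      by (simp add: sum_distrib_left rowz)
    moreover have "card (A - {\<lambda>_. 0}) = card A - 1" using A0 finA by simp
    ultimately show ?thesis by (simp add: algebra_simps)
  qed
  have R: "2 * (\<Sum>z\<in>V. card {w\<in>A. symp n w z = 0}) = 2 * card CR * card A + card (V - CR) * card A"
  proof -
    have "(\<Sum>z\<in>V. card {w\<in>A. symp n w z = 0}) = (\<Sum>z\<in>V - CR. card {w\<in>A. symp n w z = 0})
       + (\<Sum>z\<in>CR. card {w\<in>A. symp n w z = 0})"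
      by (rule sum.subset_diff[OF CRV finV'])
    moreover have "2 * (\<Sum>z\<in>V - CR. card {w\<in>A. symp n w z = 0}) = (\<Sum>z\<in>V - CR. card A)"
      by (simp add: sum_distrib_left col)
    moreover have "(\<Sum>z\<in>CR. card {w\<in>A. symp n w z = 0}) = (\<Sum>z\<in>CR. card A)"
      by (simp add: colCR)
    ultimately show ?thesis by (simp add: algebra_simps)
  qed
  have VCR: "card V = card CR + card (V - CR)"
    using card_Diff_subset[OF finite_subset[OF CRV finV'] CRV] card_mono[OF finV' CRV] by simp
  have apos: "card A \<ge> 1" using A0 finA by (metis One_nat_def Suc_leI card_gt_0_iff empty_iff)
  then obtain a1 where a1: "card A = Suc a1" by (cases "card A") auto
  have "2 * card V + (card A - 1) * card V = 2 * card CR * card A + card (V - CR) * card A"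
    using L R swap by simp
  then have h: "2 * card V + (Suc a1 - 1) * card V = 2 * card CR * Suc a1 + card (V - CR) * Suc a1"
    using a1 by simp
  have "card V = card CR * Suc a1"
  proof -
    have "2 * card CR + 2 * card (V - CR) + a1 * card CR + a1 * card (V - CR)
      = 2 * (card CR * a1) + 2 * card CR + card (V - CR) * a1 + card (V - CR)"
      using h unfolding VCR by (simp add: add_mult_distrib add_mult_distrib2 mult.commute mult.left_commute)
    then have "card (V - CR) = card CR * a1" by (simp add: mult.commute)
    then show ?thesis using VCR by simp
  qed
  then have "card V = card CR * card A" using a1 by simp
  then show ?thesis unfolding V_def CR_def .
qed


lemma zeta_zt: "EK * (EZt * (x::E)) = 0"
  unfolding times_E_def zero_E_def by (cases x; simp)

lemma zero_zt: "EK * (0::E) = 0" by simp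

lemma card_E_vecs: "finite (E_vecs n) \<and> card (E_vecs n) = card (UNIV :: E set) ^ (2 * n)"
proof -
  have b: "bij_betw (\<lambda>x. restrict x {..<2*n}) (E_vecs n) (PiE {..<2*n} (\<lambda>_. UNIV :: E set))"
  proof (rule bij_betw_byWitness[where f'="\<lambda>(f::nat\<Rightarrow>E) i. if i < 2*n then f i else (0::E)"])
    show "\<forall>a\<in>E_vecs n. (\<lambda>i. if i < 2 * n then restrict a {..<2 * n} i else 0) = a"
      unfolding E_vecs_def by (auto simp: fun_eq_iff)
    show "\<forall>a'\<in>PiE {..<2*n} (\<lambda>_. UNIV :: E set). restrict (\<lambda>i. if i < 2 * n then a' i else 0) {..<2 * n} = a'"
    proof
      fix a' assume h: "a' \<in> PiE {..<2*n} (\<lambda>_. UNIV :: E set)"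
      show "restrict (\<lambda>i. if i < 2 * n then a' i else 0) {..<2 * n} = a'"
      proof
        fix i show "restrict (\<lambda>i. if i < 2 * n then a' i else 0) {..<2 * n} i = a' i"
          using PiE_arb[OF h, of i] by (cases "i < 2*n") auto
      qed
    qed
    show "(\<lambda>x. restrict x {..<2 * n}) ` E_vecs n \<subseteq> PiE {..<2*n} (\<lambda>_. UNIV :: E set)"
      by (simp add: image_subset_iff restrict_PiE_iff)
    show "(\<lambda>f i. if i < 2 * n then f i else 0) ` PiE {..<2*n} (\<lambda>_. UNIV :: E set) \<subseteq> E_vecs n"
      unfolding E_vecs_def by (simp add: image_subset_iff)
  qed
  have f: "finite (PiE {..<2*n} (\<lambda>_. UNIV :: E set))" by (simp add: finite_PiE)
  have c: "card (PiE {..<2*n} (\<lambda>_. UNIV :: E set)) = card (UNIV :: E set) ^ (2 * n)"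
    by (simp add: card_PiE)
  have "finite (E_vecs n)" using bij_betw_finite[OF b] f by simp
  moreover have "card (E_vecs n) = card (UNIV :: E set) ^ (2 * n)" using bij_betw_same_card[OF b] c by simp
  ultimately show ?thesis by simp
qed

theorem mainTheorem12:
  fixes n :: nat and C :: "(nat \<Rightarrow> E) set"
  assumes "E_linear_code n C" and "C \<noteq> {\<lambda>_. 0}"
  shows "\<not> (left_symp_nice n C \<and> right_symp_nice n C)"
proof
  assume nice: "left_symp_nice n C \<and> right_symp_nice n C"
  define V where "V = E_vecs n"
  have CV: "C \<subseteq> V" and C0: "(\<lambda>_. 0) \<in> C"
    and Cadd: "\<And>x y. x\<in>C \<Longrightarrow> y\<in>C \<Longrightarrow> (\<lambda>i. x i + y i) \<in> C"
    and Cmul: "\<And>e x. x\<in>C \<Longrightarrow> (\<lambda>i. e * x i) \<in> C"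
    using assms(1) unfolding E_linear_code_def V_def by auto
  have finV: "finite V" and cardV: "card V = card (UNIV :: E set) ^ (2 * n)"
    using card_E_vecs V_def by auto
  have finC: "finite C" using CV finV finite_subset by blast
  define A where "A = {w\<in>C. \<forall>i. EK * w i = 0}"
  have AC: "A \<subseteq> C" unfolding A_def by auto
  have A0: "(\<lambda>_. 0) \<in> A" unfolding A_def using C0 by simp
  have Aadd: "(\<lambda>i. x i + y i) \<in> A" if "x \<in> A" "y \<in> A" for x y
    using that Cadd unfolding A_def by (auto simp: distrib_left)
  have Azt: "EK * w i = 0" if "w \<in> A" for w i using that unfolding A_def by auto
  have cnt: "card V = card (perp_SR n A) * card A"
    unfolding V_def by (rule count) (use AC CV A0 Aadd Azt finV V_def in auto)
  have perpeq: "perp_SR n C = perp_SR n A"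
  proof
    show "perp_SR n C \<subseteq> perp_SR n A" using AC unfolding perp_SR_def by auto
    show "perp_SR n A \<subseteq> perp_SR n C"
    proof
      fix z assume zA: "z \<in> perp_SR n A"
      have "symp n w z = 0" if wC: "w \<in> C" for w
      proof -
        have w1: "(\<lambda>i. w i + EK * w i) \<in> A"
          unfolding A_def using Cadd[OF wC Cmul[OF wC]] by (simp add: zt_decomp)
        have w2: "(\<lambda>i. EZt * w i) \<in> A"
          unfolding A_def using Cmul[OF wC] by (simp add: zeta_zt)
        have "symp n (\<lambda>i. EZt * w i) z = 0"
          using zA w2 unfolding perp_SR_def by blast
        then have "EZt * symp n w z = 0" by (simp add: symp_smult_left)
        then have k0: "EK * symp n w z = 0" using K_Zt by simp
        have "symp n w z = symp n (\<lambda>i. EK * w i + (w i + EK * w i)) z"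
          by (simp only: decomp[symmetric])
        also have "\<dots> = symp n (\<lambda>i. EK * w i) z + symp n (\<lambda>i. w i + EK * w i) z"
          by (rule symp_add_left)
        also have "\<dots> = 0" using k0 zA w1 unfolding perp_SR_def by (simp add: symp_smult_left)
        finally show ?thesis .
      qed
      then show "z \<in> perp_SR n C" using zA unfolding perp_SR_def by auto
    qed
  qed
  have CR0: "(\<lambda>_. 0) \<in> perp_SR n A"
    unfolding perp_SR_def E_vecs_def by (auto intro: symp_zt_right)
  have finCR: "finite (perp_SR n A)" using finV unfolding perp_SR_def V_def by auto
  have crpos: "card (perp_SR n A) > 0" using CR0 finCR card_gt_0_iff by blast
  have "card C * card (perp_SR n C) = card V"
    using nice cardV unfolding right_symp_nice_def by simp
  then have "card C * card (perp_SR n A) = card A * card (perp_SR n A)"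
    using cnt perpeq by (simp add: mult.commute)
  then have "card C = card A" using crpos by simp
  then have CA: "C = A" using AC finC by (metis card_subset_eq)
  have "perp_SL n C = V"
    unfolding perp_SL_def V_def using CA Azt by (auto intro: symp_zt_right)
  then have "card C * card V = card V" using nice cardV unfolding left_symp_nice_def by simp
  moreover have "card V > 0" using finV C0 CV card_gt_0_iff by blast
  ultimately have "card C = 1" by simp
  then obtain c where "C = {c}" by (rule card_1_singletonE)
  then show False using C0 assms(2) by simp
qed

end
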